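(* Let $0<p\le n$. Let $\mathbf{X}$ be a deterministic $n\times p$ matrix with $\mathbf{X}^T\mathbf{X}=\mathbf{I}_p$, let $\boldsymbol\beta_0=(\beta_1,0,\dots,0)^T$ with $\beta_1\neq0$, let $\mathbf{y}=\mathbf{X}\boldsymbol\beta_0+\boldsymbol\varepsilon$ with $\varepsilon_i$ i.i.d. $N(0,\sigma^2)$, and $\mathbf z=\mathbf X^T\mathbf y$. For $\lambda\ge0$ let $$L_p(\lambda)=\frac1n\Big(\beta_1-\operatorname{sgn}(z_1)(|z_1|-\lambda)_+\Big)^2+\frac1n\sum_{j=2}^p\big((|z_j|-\lambda)_+\big)^2,$$ and $L_p(\lambda_p^* )=\min_{\lambda\ge0}L_p(\lambda)$. If $\operatorname{sgn}(\beta_1)\neq\operatorname{sgn}(z_1)$, then $nL_p(\lambda_p^* )=\beta_1^2$.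
   Context: $(a)_+=\max(a,0)$; $\operatorname{sgn}$ is the sign function. $L_p(\lambda)$ is the $L_2$ loss $\|\mathbf X\boldsymbol\beta_0-\mathbf X\hat{\boldsymbol\beta}_\lambda\|^2/n$ of the Lasso estimate $\hat\beta_{\lambda j}=\operatorname{sgn}(z_j)(|z_j|-\lambda)_+$ under the orthonormal design (for $p=1$ the sum is empty). *)

theory Defs
  imports Complex_Main
begin

definition soft_thr :: "real \<Rightarrow> real \<Rightarrow> real" where
  "soft_thr lam z = sgn z * max (\<bar>z\<bar> - lam) 0"

text \<open>The loss L_p(lambda); vectors are indexed by 1..p.\<close>
definition lasso_loss :: "nat \<Rightarrow> nat \<Rightarrow> real \<Rightarrow> (nat \<Rightarrow> real) \<Rightarrow> real \<Rightarrow> real" where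
  "lasso_loss n p \<beta>1 z lam =
     (1 / real n) * (\<beta>1 - soft_thr lam (z 1))\<^sup>2
     + (1 / real n) * (\<Sum>j = 2..p. (max (\<bar>z j\<bar> - lam) 0)\<^sup>2)"

end

theory Submission
  imports Defs
begin

theorem lemma2p1:
  fixes n p :: nat and X :: "nat \<Rightarrow> nat \<Rightarrow> real" and \<beta>1 :: real
    and \<beta>0 \<epsilon> y z :: "nat \<Rightarrow> real" and lam_star :: real
  assumes "0 < p" and "p \<le> n"
    and orth: "\<forall>j\<in>{1..p}. \<forall>k\<in>{1..p}.
                 (\<Sum>i = 1..n. X i j * X i k) = (if j = k then 1 else 0)"
    and "\<beta>1 \<noteq> 0"
    and beta0: "\<forall>j. \<beta>0 j = (if j = 1 then \<beta>1 else 0)"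
    and ydef: "\<forall>i. y i = (\<Sum>j = 1..p. X i j * \<beta>0 j) + \<epsilon> i"
    and zdef: "\<forall>j. z j = (\<Sum>i = 1..n. X i j * y i)"
    and "lam_star \<ge> 0"
    and minim: "\<forall>lam \<ge> 0. lasso_loss n p \<beta>1 z lam_star \<le> lasso_loss n p \<beta>1 z lam"
    and "sgn \<beta>1 \<noteq> sgn (z 1)"
  shows "real n * lasso_loss n p \<beta>1 z lam_star = \<beta>1\<^sup>2"
proof -
  have n0: "real n > 0" using assms(1,2) by simp
  have sgnprod: "\<beta>1 * soft_thr lam (z 1) \<le> 0" for lam
  proof -
    have m: "max (\<bar>z 1\<bar> - lam) 0 \<ge> 0" by simp
    have "\<beta>1 * sgn (z 1) \<le> 0"
      using assms(10) assms(4)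
      by (cases "\<beta>1 > 0"; cases "z 1 > 0"; cases "z 1 = 0"; auto simp: sgn_if)
    then show ?thesis unfolding soft_thr_def using m
      by (metis mult.assoc mult_nonneg_nonpos2 mult_nonpos_nonneg mult.commute)
  qed
  have lower: "real n * lasso_loss n p \<beta>1 z lam \<ge> \<beta>1\<^sup>2" for lam
  proof -
    have "(\<beta>1 - soft_thr lam (z 1))\<^sup>2 \<ge> \<beta>1\<^sup>2"
    proof -
      have "(\<beta>1 - soft_thr lam (z 1))\<^sup>2 = \<beta>1\<^sup>2 - 2 * (\<beta>1 * soft_thr lam (z 1)) + (soft_thr lam (z 1))\<^sup>2"
        by (simp add: power2_eq_square algebra_simps)
      moreover have "(soft_thr lam (z 1))\<^sup>2 \<ge> 0" by simp
      ultimately show ?thesis using sgnprod[of lam] by linarith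
    qed
    moreover have "(\<Sum>j = 2..p. (max (\<bar>z j\<bar> - lam) 0)\<^sup>2) \<ge> 0"
      by (simp add: sum_nonneg)
    ultimately show ?thesis unfolding lasso_loss_def using n0
      by (simp add: algebra_simps)
  qed
  define M where "M = (\<Sum>j = 1..p. \<bar>z j\<bar>)"
  have M0: "M \<ge> 0" unfolding M_def by (simp add: sum_nonneg)
  have zle: "\<bar>z j\<bar> \<le> M" if "j \<in> {1..p}" for j
    unfolding M_def using that
    by (intro member_le_sum) auto
  have "lasso_loss n p \<beta>1 z M = (1 / real n) * \<beta>1\<^sup>2"
  proof -
    have "soft_thr M (z 1) = 0"
      using zle[of 1] assms(1) unfolding soft_thr_def by simp
    moreover have "(\<Sum>j = 2..p. (max (\<bar>z j\<bar> - M) 0)\<^sup>2) = 0"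
      by (rule sum.neutral) (use zle in auto)
    ultimately show ?thesis unfolding lasso_loss_def by simp
  qed
  then have "lasso_loss n p \<beta>1 z lam_star \<le> (1 / real n) * \<beta>1\<^sup>2"
    using minim M0 by metis
  then have "real n * lasso_loss n p \<beta>1 z lam_star \<le> real n * ((1 / real n) * \<beta>1\<^sup>2)"
    using n0 by (intro mult_left_mono) auto
  then have "real n * lasso_loss n p \<beta>1 z lam_star \<le> \<beta>1\<^sup>2"
    using n0 by simp
  with lower[of lam_star] show ?thesis by linarith
qed

end
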